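(* Let $\Gamma=G_5$ be the graph with two vertices $V_\alpha,V_\beta$ joined by exactly four edges (no loops), with degrees $d_\alpha,d_\beta\in\mathbb{Z}$. The family $\mathcal{F}(G_5,(d_\alpha,d_\beta))$ is jumping if and only if $0\le d_\alpha\le 2$ and $0\le d_\beta\le 2$.
   Context: Let $\Gamma$ be a connected graph (loops and multiple edges allowed) with vertices $V_1,\dots,V_n$ and integers $d_1,\dots,d_n$. A nodal curve with dual graph $\Gamma$ and rational components is a curve $C$ obtained from the disjoint union of copies $\mathbb{P}^1_{V_i}$ of $\mathbb{P}^1$ by choosing, for each edge of $\Gamma$, a point on each of its endpoint copies (all chosen points distinct) and identifying these two points to a node. A line bundle on $C$ is equivalent to line bundles on each $\mathbb{P}^1_{V_i}$ together with, at each node, an identification of the two fibres (descent data, a scalar in $\mathbb{C}^*$ after trivialising); global sections are tuples of sections on the $\mathbb{P}^1$'s compatible with these identifications. The family $\mathcal{F}(\Gamma,(d_i))$ consists of all pairs $(C,L)$ with $C$ such a curve (any choice of node positions) and $L$ a line bundle on $C$ whose pullback to $\mathbb{P}^1_{V_i}$ has degree $d_i$ for all $i$ (any descent data). $\Gamma$ with degrees $(d_i)$ is called jumping if $h^0(C,L)$ is not constant on $\mathcal{F}(\Gamma,(d_i))$, and non-jumping otherwise. *)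

theory Defs
  imports Complex_Main "HOL-Computational_Algebra.Polynomial" "HOL-Library.Product_Plus"
begin

text \<open>Global sections of O(d) on P^1: homogeneous polynomials of degree d in (x,y),
  encoded by their dehomogenisation: p = sum c_i t^i encodes sum c_i x^i y^(d-i).
  For d < 0 the space is zero.\<close>
definition Hom :: "int \<Rightarrow> complex poly set" where
  "Hom d = {p. if d < 0 then p = 0 else degree p \<le> nat d}"

text \<open>Value of the section p of O(d) at the point with homogeneous coordinates (x,y)
  (in the trivialisation of the fibre given by this representative).\<close>
definition heval :: "int \<Rightarrow> complex poly \<Rightarrow> complex \<times> complex \<Rightarrow> complex" where
  "heval d p v = (\<Sum>i\<le>nat d. coeff p i * fst v ^ i * snd v ^ (nat d - i))"

definition four_points :: "(nat \<Rightarrow> complex \<times> complex) \<Rightarrow> bool" where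
  "four_points P \<longleftrightarrow> (\<forall>e<4. P e \<noteq> (0, 0)) \<and>
     (\<forall>e<4. \<forall>e'<4. e \<noteq> e' \<longrightarrow> fst (P e) * snd (P e') \<noteq> snd (P e) * fst (P e'))"

text \<open>Curve with dual graph G5: P^1_alpha and P^1_beta glued along four nodes, the e-th node
  identifying P e on P^1_alpha with Q e on P^1_beta. The line bundle has degrees (da, db)
  and descent data lam e (nonzero) at the e-th node.\<close>
definition G5_sections ::
  "int \<Rightarrow> int \<Rightarrow> (nat \<Rightarrow> complex \<times> complex) \<Rightarrow> (nat \<Rightarrow> complex \<times> complex)
     \<Rightarrow> (nat \<Rightarrow> complex) \<Rightarrow> (complex poly \<times> complex poly) set" where
  "G5_sections da db P Q lam =
     {(f, g). f \<in> Hom da \<and> g \<in> Hom db \<and>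
        (\<forall>e<4. heval da f (P e) = lam e * heval db g (Q e))}"

definition pair_scale :: "complex \<Rightarrow> complex poly \<times> complex poly \<Rightarrow> complex poly \<times> complex poly" where
  "pair_scale c fg = (smult c (fst fg), smult c (snd fg))"

definition h0_G5 ::
  "int \<Rightarrow> int \<Rightarrow> (nat \<Rightarrow> complex \<times> complex) \<Rightarrow> (nat \<Rightarrow> complex \<times> complex)
     \<Rightarrow> (nat \<Rightarrow> complex) \<Rightarrow> nat" where
  "h0_G5 da db P Q lam = vector_space.dim pair_scale (G5_sections da db P Q lam)"

definition G5_member ::
  "(nat \<Rightarrow> complex \<times> complex) \<Rightarrow> (nat \<Rightarrow> complex \<times> complex) \<Rightarrow> (nat \<Rightarrow> complex) \<Rightarrow> bool" where
  "G5_member P Q lam \<longleftrightarrow> four_points P \<and> four_points Q \<and> (\<forall>e<4. lam e \<noteq> 0)"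

definition G5_jumping :: "int \<Rightarrow> int \<Rightarrow> bool" where
  "G5_jumping da db \<longleftrightarrow>
     (\<exists>P Q lam P' Q' lam'. G5_member P Q lam \<and> G5_member P' Q' lam' \<and>
        h0_G5 da db P Q lam \<noteq> h0_G5 da db P' Q' lam')"

end

theory Submission
  imports Defs
begin

lemma Hom_deg: "f \<in> Hom d \<Longrightarrow> degree f \<le> nat d"
  by (auto simp: Hom_def split: if_splits)

lemma heval_0[simp]: "heval d 0 v = 0"
  by (simp add: heval_def)

lemma heval_add: "heval d (p + q) v = heval d p v + heval d q v"
  by (simp add: heval_def algebra_simps sum.distrib)

lemma heval_smult: "heval d (smult c p) v = c * heval d p v"
  by (simp add: heval_def algebra_simps sum_distrib_left)

lemma heval_minus: "heval d (- p) v = - heval d p v"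
  by (simp add: heval_def sum_negf)

lemma heval_poly:
  assumes "snd v \<noteq> 0" "degree p \<le> nat d"
  shows "heval d p v = snd v ^ nat d * poly p (fst v / snd v)"
proof -
  have "poly p (fst v / snd v) = (\<Sum>i\<le>nat d. coeff p i * (fst v / snd v) ^ i)"
    unfolding poly_altdef
    by (rule sum.mono_neutral_left) (use assms in \<open>auto simp: coeff_eq_0\<close>)
  hence "snd v ^ nat d * poly p (fst v / snd v) = (\<Sum>i\<le>nat d. coeff p i * (snd v ^ nat d * (fst v / snd v) ^ i))"
    by (simp add: sum_distrib_left algebra_simps)
  also have "\<dots> = (\<Sum>i\<le>nat d. coeff p i * fst v ^ i * snd v ^ (nat d - i))"
  proof (rule sum.cong)
    fix i assume "i \<in> {..nat d}"
    hence "snd v ^ nat d = snd v ^ i * snd v ^ (nat d - i)"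
      by (simp add: power_add[symmetric])
    thus "coeff p i * (snd v ^ nat d * (fst v / snd v) ^ i) = coeff p i * fst v ^ i * snd v ^ (nat d - i)"
      using assms(1) by (simp add: power_divide field_simps)
  qed simp
  finally show ?thesis by (simp add: heval_def)
qed

lemma heval_inf:
  assumes "snd v = 0"
  shows "heval d p v = coeff p (nat d) * fst v ^ nat d"
proof -
  have "heval d p v = (\<Sum>i\<le>nat d. if i = nat d then coeff p i * fst v ^ i else 0)"
    unfolding heval_def by (rule sum.cong) (use assms in auto)
  thus ?thesis by simp
qed

lemma coeff_mult_bound:
  fixes p q :: "complex poly"
  assumes "degree p \<le> a" "degree q \<le> b"
  shows "coeff (p * q) (a + b) = coeff p a * coeff q b"
proof (cases "degree p = a \<and> degree q = b")
  case True thus ?thesis using coeff_mult_degree_sum[of p q] by simp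
next
  case False
  hence "degree p < a \<or> degree q < b" using assms by auto
  moreover have "degree (p*q) \<le> degree p + degree q" by (rule degree_mult_le)
  ultimately show ?thesis using assms by (auto simp: coeff_eq_0)
qed

lemma heval_mult:
  assumes "degree p \<le> a" "degree q \<le> b"
  shows "heval (int (a + b)) (p * q) v = heval (int a) p v * heval (int b) q v"
proof (cases "snd v = 0")
  case True thus ?thesis using coeff_mult_bound[OF assms]
    by (simp add: heval_inf power_add nat_int_add)
next
  case False
  have "degree (p*q) \<le> a + b" using degree_mult_le[of p q] assms by simp
  thus ?thesis using False assms by (simp add: heval_poly power_add nat_int_add)
qed

lemma heval_pow:
  assumes "degree L \<le> 1"
  shows "heval (int n) (L ^ n) v = (heval 1 L v) ^ n"
proof (induction n)
  case 0 thus ?case by (simp add: heval_def)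
next
  case (Suc n)
  have d: "degree (L ^ n) \<le> n"
  proof -
    have "degree (L ^ n) \<le> degree L * n" by (rule degree_power_le)
    also have "\<dots> \<le> 1 * n" using assms by (intro mult_right_mono) auto
    finally show ?thesis by simp
  qed
  have "heval (int (1 + n)) (L * L ^ n) v = heval (int 1) L v * heval (int n) (L^n) v"
    by (rule heval_mult[OF assms d])
  thus ?case using Suc by simp
qed

definition lf :: "complex \<times> complex \<Rightarrow> complex poly" where
  "lf p = [: - fst p, snd p :]"

lemma lf_deg: "degree (lf p) \<le> 1"
  by (simp add: lf_def)

lemma heval_lf: "heval 1 (lf p) v = snd p * fst v - fst p * snd v"
  by (simp add: heval_def lf_def)

lemma heval_at1: "degree p \<le> nat d \<Longrightarrow> heval d p (x, 1) = poly p x"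
  using heval_poly[of "(x,1)" p d] by simp


interpretation pv: vector_space pair_scale
  by unfold_locales (auto simp: pair_scale_def smult_add_right smult_add_left prod_eq_iff)

context vector_space begin

lemma dim_hyperplane:
  assumes U: "subspace U" and F: "finite F" "U \<subseteq> span F"
   and add: "\<And>x y. x \<in> U \<Longrightarrow> y \<in> U \<Longrightarrow> \<phi> (x + y) = \<phi> x + \<phi> y"
   and sc: "\<And>c x. x \<in> U \<Longrightarrow> \<phi> (scale c x) = c * \<phi> x"
   and s: "s \<in> U" "\<phi> s = 1"
  shows "dim {u \<in> U. \<phi> u = 0} + 1 = dim U"
proof -
  define K where "K = {u \<in> U. \<phi> u = 0}"
  have "0 \<in> U" using U subspace_0 by blast
  have phi0: "\<phi> 0 = 0" using sc[OF s(1), of 0] by simp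
  have subK: "subspace K" unfolding subspace_def K_def
    using phi0 \<open>0 \<in> U\<close> add sc U by (auto simp: subspace_add subspace_scale)
  obtain B where B: "B \<subseteq> K" "independent B" "K \<subseteq> span B" "card B = dim K"
    using basis_exists[of K] by blast
  have KU: "K \<subseteq> U" by (auto simp: K_def)
  have finB: "finite B"
    using independent_span_bound[OF F(1) B(2)] B(1) KU F(2) by blast
  have spB: "span B = K" using span_subspace[OF B(1) B(3) subK] .
  have sB: "s \<notin> span B" using spB s by (simp add: K_def)
  have ind: "independent (insert s B)" using independent_insertI[OF sB B(2)] .
  have sub: "insert s B \<subseteq> U" using B(1) KU s by auto
  have spn: "U \<subseteq> span (insert s B)"
  proof
    fix u assume u: "u \<in> U"
    define w where "w = u + scale (- \<phi> u) s"
    have wU: "w \<in> U" unfolding w_def by (rule subspace_add[OF U u subspace_scale[OF U s(1)]])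
    have "\<phi> w = \<phi> u + \<phi> (scale (- \<phi> u) s)" unfolding w_def
      by (rule add[OF u subspace_scale[OF U s(1)]])
    moreover have "\<phi> (scale (- \<phi> u) s) = - \<phi> u" using sc[OF s(1), of "- \<phi> u"] s(2) by simp
    ultimately have "\<phi> w = 0" by simp
    hence "w \<in> span B" using wU spB by (simp add: K_def)
    hence "w \<in> span (insert s B)" using span_mono[of B "insert s B"] by blast
    moreover have "scale (\<phi> u) s \<in> span (insert s B)"
      by (intro span_scale span_base) simp
    ultimately have "w + scale (\<phi> u) s \<in> span (insert s B)" by (rule span_add)
    moreover have "w + scale (\<phi> u) s = u" unfolding w_def
      by (simp add: scale_minus_left)
    ultimately show "u \<in> span (insert s B)" by simp
  qed
  have "card (insert s B) = dim U" using basis_card_eq_dim[OF sub spn ind] .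
  moreover have "s \<notin> B" using sB span_base by blast
  ultimately show ?thesis using finB B(4) K_def by simp
qed

lemma dim_kernels:
  assumes V: "subspace V" "finite F" "V \<subseteq> span F"
  and add: "\<And>i x y. i < k \<Longrightarrow> x \<in> V \<Longrightarrow> y \<in> V \<Longrightarrow> \<phi> i (x + y) = \<phi> i x + \<phi> i y"
  and sc: "\<And>i c x. i < k \<Longrightarrow> x \<in> V \<Longrightarrow> \<phi> i (scale c x) = c * \<phi> i x"
  and s: "\<And>i. i < k \<Longrightarrow> s i \<in> V"
  and d: "\<And>i j. i < k \<Longrightarrow> j < k \<Longrightarrow> \<phi> i (s j) = (if i = j then 1 else 0)"
  shows "dim {v \<in> V. \<forall>i<k. \<phi> i v = 0} + k = dim V"
proof -
  have "j \<le> k \<Longrightarrow> dim {v \<in> V. \<forall>i<j. \<phi> i v = 0} + j = dim V" for j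
  proof (induction j)
    case 0 thus ?case by simp
  next
    case (Suc j)
    define U where "U = {v \<in> V. \<forall>i<j. \<phi> i v = 0}"
    have jk: "j < k" using Suc by simp
    have phi0: "\<phi> i 0 = 0" if "i < k" for i using sc[OF that s[OF that], of 0] by simp
    have "0 \<in> V" using V subspace_0 by blast
    have subU: "subspace U" unfolding subspace_def U_def
      using phi0 \<open>0 \<in> V\<close> add sc V(1) jk by (auto simp: subspace_add subspace_scale)
    have UF: "U \<subseteq> span F" using V(3) by (auto simp: U_def)
    have sU: "s j \<in> U" using s[OF jk] d jk by (auto simp: U_def)
    have "dim {u \<in> U. \<phi> j u = 0} + 1 = dim U"
      by (rule dim_hyperplane[OF subU V(2) UF _ _ sU]) (use add sc jk d in \<open>auto simp: U_def\<close>)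
    moreover have "{u \<in> U. \<phi> j u = 0} = {v \<in> V. \<forall>i<Suc j. \<phi> i v = 0}"
      by (auto simp: U_def less_Suc_eq)
    ultimately show ?case using Suc U_def by simp
  qed
  thus ?thesis by simp
qed

lemma dim_nonzero:
  assumes "finite F" "S \<subseteq> span F" "x \<in> S" "x \<noteq> 0"
  shows "dim S \<noteq> 0"
proof
  assume d: "dim S = 0"
  obtain B where B: "B \<subseteq> S" "independent B" "S \<subseteq> span B" "card B = dim S"
    using basis_exists[of S] by blast
  have "finite B" using independent_span_bound[OF assms(1) B(2)] B(1) assms(2) by blast
  hence "B = {}" using B(4) d by simp
  thus False using B(3) assms(3,4) by auto
qed

lemma dim_zero_set: "dim {0} = 0"
  using dim_span[of "{}"] dim_eq_card_independent[OF independent_empty] by simp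

end

lemma roots3:
  fixes p :: "complex poly"
  assumes "degree p \<le> 2" "poly p a = 0" "poly p b = 0" "poly p c = 0"
    "a \<noteq> b" "a \<noteq> c" "b \<noteq> c"
  shows "p = 0"
proof (rule ccontr)
  assume p: "p \<noteq> 0"
  have "{a,b,c} \<subseteq> {x. poly p x = 0}" using assms by auto
  hence "card {a,b,c} \<le> card {x. poly p x = 0}"
    by (intro card_mono poly_roots_finite p)
  also have "\<dots> \<le> degree p" by (rule card_poly_roots_bound[OF p])
  finally show False using assms by simp
qed

lemma fp_nz: "four_points P \<Longrightarrow> i < 4 \<Longrightarrow> j < 4 \<Longrightarrow> i \<noteq> j \<Longrightarrow>
   fst (P i) * snd (P j) \<noteq> snd (P i) * fst (P j)"
  by (auto simp: four_points_def)

lemma four_points_Z: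
  assumes Q: "four_points Q" and dg: "degree g \<le> nat d" and d2: "nat d \<le> 2"
    and z: "\<forall>e<4. heval d g (Q e) = 0"
  shows "g = 0"
proof -
  have two: False if "i < 4" "j < 4" "i \<noteq> j" "snd (Q i) = 0" "snd (Q j) = 0" for i j
    using fp_nz[OF Q that(1-3)] that(4,5) by simp
  have "\<exists>a b c. a < 4 \<and> b < 4 \<and> c < 4 \<and> a \<noteq> b \<and> a \<noteq> c \<and> b \<noteq> c \<and>
        snd (Q a) \<noteq> 0 \<and> snd (Q b) \<noteq> 0 \<and> snd (Q c) \<noteq> 0"
  proof (cases "snd (Q 0) = 0")
    case True thus ?thesis using two[of 0 1] two[of 0 2] two[of 0 3]
      by (intro exI[of _ 1] exI[of _ 2] exI[of _ 3]) auto
  next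
    case F0: False show ?thesis
    proof (cases "snd (Q 1) = 0")
      case True thus ?thesis using F0 two[of 1 2] two[of 1 3]
        by (intro exI[of _ 0] exI[of _ 2] exI[of _ 3]) auto
    next
      case F1: False show ?thesis
      proof (cases "snd (Q 2) = 0")
        case True thus ?thesis using F0 F1 two[of 2 3]
          by (intro exI[of _ 0] exI[of _ 1] exI[of _ 3]) auto
      next
        case False thus ?thesis using F0 F1
          by (intro exI[of _ 0] exI[of _ 1] exI[of _ 2]) auto
      qed
    qed
  qed
  then obtain a b c where abc: "a < 4" "b < 4" "c < 4" "a \<noteq> b" "a \<noteq> c" "b \<noteq> c"
    "snd (Q a) \<noteq> 0" "snd (Q b) \<noteq> 0" "snd (Q c) \<noteq> 0" by blast
  define r where "r i = fst (Q i) / snd (Q i)" for i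
  have root: "poly g (r i) = 0" if "i < 4" "snd (Q i) \<noteq> 0" for i
    using z that heval_poly[OF that(2) dg] by (simp add: r_def)
  have dist: "r i \<noteq> r j" if "i < 4" "j < 4" "i \<noteq> j" "snd (Q i) \<noteq> 0" "snd (Q j) \<noteq> 0" for i j
    using fp_nz[OF Q that(1-3)] that(4,5) by (auto simp: r_def field_simps)
  show ?thesis
    by (rule roots3[of g "r a" "r b" "r c"]) (use dg d2 abc root dist in auto)
qed

definition fe :: "(nat \<Rightarrow> complex \<times> complex) \<Rightarrow> nat \<Rightarrow> nat \<Rightarrow> complex poly" where
  "fe P e n = lf (P ((e+1) mod 4)) ^ n * lf (P ((e+2) mod 4)) * lf (P ((e+3) mod 4))"

lemma fe_deg: "degree (fe P e n) \<le> n + 2"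
proof -
  have d: "degree (lf p ^ n) \<le> n" for p
  proof -
    have "degree (lf p ^ n) \<le> degree (lf p) * n" by (rule degree_power_le)
    also have "\<dots> \<le> 1 * n" using lf_deg by (intro mult_right_mono) auto
    finally show ?thesis by simp
  qed
  have "degree (lf (P ((e+1) mod 4)) ^ n * lf (P ((e+2) mod 4))) \<le> n + 1"
    using degree_mult_le[of "lf (P ((e+1) mod 4)) ^ n"] d lf_deg by (meson add_mono order_trans)
  thus ?thesis unfolding fe_def using degree_mult_le lf_deg
    by (smt (verit) add_mono le_trans one_add_one add.assoc)
qed

lemma heval_fe:
  "heval (int (n + 2)) (fe P e n) v =
     heval 1 (lf (P ((e+1) mod 4))) v ^ n * heval 1 (lf (P ((e+2) mod 4))) v * heval 1 (lf (P ((e+3) mod 4))) v"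
proof -
  have d: "degree (lf p ^ n) \<le> n" for p
  proof -
    have "degree (lf p ^ n) \<le> degree (lf p) * n" by (rule degree_power_le)
    also have "\<dots> \<le> 1 * n" using lf_deg by (intro mult_right_mono) auto
    finally show ?thesis by simp
  qed
  have d2: "degree (lf (P ((e+1) mod 4)) ^ n * lf (P ((e+2) mod 4))) \<le> n + 1"
    using degree_mult_le[of "lf (P ((e+1) mod 4)) ^ n"] d lf_deg by (meson add_mono order_trans)
  have "heval (int ((n+1) + 1)) (fe P e n) v =
     heval (int (n+1)) (lf (P ((e+1) mod 4)) ^ n * lf (P ((e+2) mod 4))) v * heval (int 1) (lf (P ((e+3) mod 4))) v"
    unfolding fe_def by (rule heval_mult[OF d2 lf_deg])
  also have "heval (int (n+1)) (lf (P ((e+1) mod 4)) ^ n * lf (P ((e+2) mod 4))) v =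
      heval (int n) (lf (P ((e+1) mod 4)) ^ n) v * heval (int 1) (lf (P ((e+2) mod 4))) v"
    by (rule heval_mult[OF d lf_deg])
  finally show ?thesis by (simp add: heval_pow[OF lf_deg] add.assoc)
qed

lemma lf_self: "heval 1 (lf p) p = 0"
  by (simp add: heval_lf mult.commute)

lemma lf_other: "four_points P \<Longrightarrow> i < 4 \<Longrightarrow> j < 4 \<Longrightarrow> i \<noteq> j \<Longrightarrow> heval 1 (lf (P i)) (P j) \<noteq> 0"
  using fp_nz[of P j i] by (simp add: heval_lf mult.commute)

lemma fe_at:
  assumes P: "four_points P" and n: "n \<ge> 1" and e: "e < 4" and i: "i < 4"
  shows "heval (int (n + 2)) (fe P e n) (P i) = 0 \<longleftrightarrow> i \<noteq> e"
proof -
  have m: "(e+1) mod 4 < 4" "(e+2) mod 4 < 4" "(e+3) mod 4 < 4" by auto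
  have e4: "e = 0 \<or> e = 1 \<or> e = 2 \<or> e = 3" using e by auto
  have i4: "i = 0 \<or> i = 1 \<or> i = 2 \<or> i = 3" using i by auto
  have ne: "(e+1) mod 4 \<noteq> e" "(e+2) mod 4 \<noteq> e" "(e+3) mod 4 \<noteq> e" using e4 by (elim disjE; simp)+
  show ?thesis
  proof (cases "i = e")
    case True thus ?thesis
      using heval_fe[of n P e "P e"] lf_other[OF P m(1) e ne(1)] lf_other[OF P m(2) e ne(2)] lf_other[OF P m(3) e ne(3)]
      by simp
  next
    case False
    hence "i = (e+1) mod 4 \<or> i = (e+2) mod 4 \<or> i = (e+3) mod 4" using e4 i4 False by (elim disjE; simp)
    hence z: "heval 1 (lf (P ((e+1) mod 4))) (P i) = 0 \<or> heval 1 (lf (P ((e+2) mod 4))) (P i) = 0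
         \<or> heval 1 (lf (P ((e+3) mod 4))) (P i) = 0" by (elim disjE) (simp_all only: lf_self simp_thms)
    have "heval (int (n + 2)) (fe P e n) (P i) = 0" unfolding heval_fe using z n by auto
    thus ?thesis using False by simp
  qed
qed


definition VV :: "int \<Rightarrow> int \<Rightarrow> (complex poly \<times> complex poly) set" where
  "VV da db = {(f,g). f \<in> Hom da \<and> g \<in> Hom db}"

lemma Hom_0[simp]: "0 \<in> Hom d" by (simp add: Hom_def)

lemma Hom_add: "f \<in> Hom d \<Longrightarrow> g \<in> Hom d \<Longrightarrow> f + g \<in> Hom d"
  by (auto simp: Hom_def split: if_splits intro: order_trans[OF degree_add_le])

lemma Hom_smult: "f \<in> Hom d \<Longrightarrow> smult c f \<in> Hom d"
  by (auto simp: Hom_def split: if_splits intro: order_trans[OF degree_smult_le])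

lemma Hom_iff: "d \<ge> 0 \<Longrightarrow> f \<in> Hom d \<longleftrightarrow> degree f \<le> nat d"
  by (simp add: Hom_def)

lemma Hom_neg: "d < 0 \<Longrightarrow> f \<in> Hom d \<longleftrightarrow> f = 0"
  by (simp add: Hom_def)

lemma subspace_VV: "pv.subspace (VV da db)"
  unfolding pv.subspace_def VV_def
  by (auto simp: pair_scale_def Hom_add Hom_smult zero_prod_def)

definition FF :: "int \<Rightarrow> int \<Rightarrow> (complex poly \<times> complex poly) set" where
  "FF da db = (\<lambda>i. (monom 1 i, 0)) ` {..nat da} \<union> (\<lambda>i. (0, monom 1 i)) ` {..nat db}"

lemma finite_FF: "finite (FF da db)" by (simp add: FF_def)

lemma VV_span: "VV da db \<subseteq> pv.span (FF da db)"
proof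
  fix v assume "v \<in> VV da db"
  then obtain f g where v: "v = (f,g)" "f \<in> Hom da" "g \<in> Hom db" by (auto simp: VV_def)
  have df: "degree f \<le> nat da" and dg: "degree g \<le> nat db" using v Hom_deg by auto
  have e1: "(f, 0) = (\<Sum>i\<le>nat da. pair_scale (coeff f i) (monom 1 i, 0))"
    by (simp add: prod_eq_iff fst_sum snd_sum pair_scale_def smult_monom poly_as_sum_of_monoms'[OF df])
  have e2: "(0, g) = (\<Sum>i\<le>nat db. pair_scale (coeff g i) (0, monom 1 i))"
    by (simp add: prod_eq_iff fst_sum snd_sum pair_scale_def smult_monom poly_as_sum_of_monoms'[OF dg])
  have "(f, 0) \<in> pv.span (FF da db)" unfolding e1
    by (intro pv.span_sum pv.span_scale pv.span_base) (auto simp: FF_def)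
  moreover have "(0, g) \<in> pv.span (FF da db)" unfolding e2
    by (intro pv.span_sum pv.span_scale pv.span_base) (auto simp: FF_def)
  ultimately have "(f, 0) + (0, g) \<in> pv.span (FF da db)" by (rule pv.span_add)
  thus "v \<in> pv.span (FF da db)" using v by simp
qed

definition phi where
  "phi da db P Q lam e v = heval da (fst v) (P e) - lam e * heval db (snd v) (Q e)"

lemma phi_add: "phi da db P Q lam e (x + y) = phi da db P Q lam e x + phi da db P Q lam e y"
  by (simp add: phi_def heval_add algebra_simps)

lemma phi_scale: "phi da db P Q lam e (pair_scale c x) = c * phi da db P Q lam e x"
  by (simp add: phi_def pair_scale_def heval_smult algebra_simps)

lemma sections_eq: "G5_sections da db P Q lam = {v \<in> VV da db. \<forall>e<4. phi da db P Q lam e v = 0}"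
  by (auto simp: G5_sections_def VV_def phi_def)

lemma subspace_sections: "pv.subspace (G5_sections da db P Q lam)"
proof -
  have "phi da db P Q lam e 0 = 0" for e using phi_scale[of da db P Q lam e 0 0]
    by (simp add: pair_scale_def zero_prod_def)
  thus ?thesis unfolding sections_eq using subspace_VV
    by (auto simp: pv.subspace_def phi_add phi_scale)
qed

lemma sections_span: "G5_sections da db P Q lam \<subseteq> pv.span (FF da db)"
  using VV_span sections_eq by blast

lemma h0_big:
  assumes M: "G5_member P Q lam" and big: "da \<ge> 3 \<or> db \<ge> 3"
  shows "h0_G5 da db P Q lam + 4 = pv.dim (VV da db)"
proof -
  have P: "four_points P" and Q: "four_points Q" and lam: "\<And>e. e < 4 \<Longrightarrow> lam e \<noteq> 0"
    using M by (auto simp: G5_member_def)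
  have "\<exists>s. (\<forall>i<4. s i \<in> VV da db) \<and>
      (\<forall>i<4. \<forall>j<4. phi da db P Q lam i (s j) = (if i = j then 1 else 0))"
  proof (cases "da \<ge> 3")
    case True
    define n where "n = nat da - 2"
    have dn: "da = int (n + 2)" and n1: "n \<ge> 1" using True by (auto simp: n_def)
    have fa: "heval da (fe P j n) (P i) = 0 \<longleftrightarrow> i \<noteq> j" if "i < 4" "j < 4" for i j
      using fe_at[OF P n1 that(2) that(1)] dn by simp
    define c where "c j = heval da (fe P j n) (P j)" for j
    have cnz: "c j \<noteq> 0" if "j < 4" for j using fa[OF that that] by (simp add: c_def)
    define s where "s j = (smult (1 / c j) (fe P j n), 0::complex poly)" for j
    show ?thesis
    proof (intro exI[of _ s] conjI allI impI)
      fix i :: nat assume "i < 4"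
      have "fe P i n \<in> Hom da" using fe_deg[of P i n] True by (simp add: Hom_iff dn)
      hence "smult (1 / c i) (fe P i n) \<in> Hom da" by (rule Hom_smult)
      thus "s i \<in> VV da db" by (simp add: s_def VV_def)
    next
      fix i j :: nat assume ij: "i < 4" "j < 4"
      have e: "phi da db P Q lam i (s j) = heval da (fe P j n) (P i) / c j"
        by (simp add: phi_def s_def heval_smult)
      show "phi da db P Q lam i (s j) = (if i = j then 1 else 0)"
      proof (cases "i = j")
        case True thus ?thesis using e cnz[OF ij(2)] by (simp add: c_def)
      next
        case False thus ?thesis using e fa[OF ij] by simp
      qed
    qed
  next
    case False
    hence True: "db \<ge> 3" using big by simp
    define n where "n = nat db - 2"
    have dn: "db = int (n + 2)" and n1: "n \<ge> 1" using True by (auto simp: n_def)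
    have fa: "heval db (fe Q j n) (Q i) = 0 \<longleftrightarrow> i \<noteq> j" if "i < 4" "j < 4" for i j
      using fe_at[OF Q n1 that(2) that(1)] dn by simp
    define c where "c j = heval db (fe Q j n) (Q j)" for j
    have cnz: "c j \<noteq> 0" if "j < 4" for j using fa[OF that that] by (simp add: c_def)
    define s where "s j = (0::complex poly, smult (- 1 / (lam j * c j)) (fe Q j n))" for j
    show ?thesis
    proof (intro exI[of _ s] conjI allI impI)
      fix i :: nat assume "i < 4"
      have "fe Q i n \<in> Hom db" using fe_deg[of Q i n] True by (simp add: Hom_iff dn)
      hence "smult (- 1 / (lam i * c i)) (fe Q i n) \<in> Hom db" by (rule Hom_smult)
      thus "s i \<in> VV da db" by (simp add: s_def VV_def)
    next
      fix i j :: nat assume ij: "i < 4" "j < 4"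
      have e: "phi da db P Q lam i (s j) = lam i * heval db (fe Q j n) (Q i) / (lam j * c j)"
        by (simp add: phi_def s_def heval_smult heval_minus)
      show "phi da db P Q lam i (s j) = (if i = j then 1 else 0)"
      proof (cases "i = j")
        case True thus ?thesis using e cnz[OF ij(2)] lam[OF ij(2)] by (simp add: c_def)
      next
        case False thus ?thesis using e fa[OF ij] by simp
      qed
    qed
  qed
  then obtain s where s: "\<And>i. i < 4 \<Longrightarrow> s i \<in> VV da db"
    "\<And>i j. i < 4 \<Longrightarrow> j < 4 \<Longrightarrow> phi da db P Q lam i (s j) = (if i = j then 1 else 0)" by blast
  have "pv.dim {v \<in> VV da db. \<forall>i<4. phi da db P Q lam i v = 0} + 4 = pv.dim (VV da db)"
    by (rule pv.dim_kernels[OF subspace_VV finite_FF VV_span, where \<phi> = "phi da db P Q lam" and s = s])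
       (use s in \<open>auto simp: phi_add phi_scale\<close>)
  thus ?thesis by (simp add: h0_G5_def sections_eq)
qed

lemma h0_small:
  assumes M: "G5_member P Q lam" and small: "\<not> (da \<ge> 3 \<or> db \<ge> 3)"
    and nj: "\<not> (0 \<le> da \<and> da \<le> 2 \<and> 0 \<le> db \<and> db \<le> 2)"
  shows "h0_G5 da db P Q lam = 0"
proof -
  have P: "four_points P" and Q: "four_points Q" and lam: "\<And>e. e < 4 \<Longrightarrow> lam e \<noteq> 0"
    using M by (auto simp: G5_member_def)
  have "G5_sections da db P Q lam = {0}"
  proof (intro equalityI subsetI)
    fix v assume "v \<in> G5_sections da db P Q lam"
    then obtain f g where v: "v = (f,g)" "f \<in> Hom da" "g \<in> Hom db"
      "\<forall>e<4. heval da f (P e) = lam e * heval db g (Q e)"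
      by (auto simp: G5_sections_def)
    have "f = 0 \<and> g = 0"
    proof (cases "da < 0")
      case True
      hence f: "f = 0" using v Hom_neg by auto
      hence "\<forall>e<4. heval db g (Q e) = 0" using v lam by auto
      moreover have "nat db \<le> 2" using small by (simp add: nat_le_iff)
      ultimately have "g = 0" using four_points_Z[OF Q Hom_deg[OF v(3)]] by simp
      thus ?thesis using f by simp
    next
      case False
      hence "db < 0" using nj small by simp
      hence g: "g = 0" using v Hom_neg by auto
      hence "\<forall>e<4. heval da f (P e) = 0" using v by auto
      moreover have "nat da \<le> 2" using small by (simp add: nat_le_iff)
      ultimately have "f = 0" using four_points_Z[OF P Hom_deg[OF v(2)]] by simp
      thus ?thesis using g by simp
    qed
    thus "v \<in> {0}" using v by (simp add: zero_prod_def)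
  next
    fix v assume "v \<in> {0::complex poly \<times> complex poly}"
    thus "v \<in> G5_sections da db P Q lam" by (simp add: G5_sections_def zero_prod_def)
  qed
  thus ?thesis by (simp add: h0_G5_def pv.dim_zero_set)
qed


definition P0 :: "nat \<Rightarrow> complex \<times> complex" where "P0 e = (of_nat e, 1)"

lemma fp_P0: "four_points P0"
  by (auto simp: four_points_def P0_def)

lemma lt4: "(e::nat) < 4 \<longleftrightarrow> e = 0 \<or> e = 1 \<or> e = 2 \<or> e = 3" by auto

lemma sec_P0:
  assumes "0 \<le> da" "da \<le> 2" "0 \<le> db" "db \<le> 2"
  shows "(f, g) \<in> G5_sections da db P0 P0 lam \<longleftrightarrow> degree f \<le> nat da \<and> degree g \<le> nat db \<and>
     poly f 0 = lam 0 * poly g 0 \<and> poly f 1 = lam 1 * poly g 1 \<and>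
     poly f 2 = lam 2 * poly g 2 \<and> poly f 3 = lam 3 * poly g 3"
proof -
  have "(f, g) \<in> G5_sections da db P0 P0 lam \<longleftrightarrow> degree f \<le> nat da \<and> degree g \<le> nat db \<and>
     (\<forall>e<4. heval da f (P0 e) = lam e * heval db g (P0 e))"
    using assms by (auto simp: G5_sections_def Hom_iff)
  also have "\<dots> \<longleftrightarrow> degree f \<le> nat da \<and> degree g \<le> nat db \<and>
     (\<forall>e<4. poly f (of_nat e) = lam e * poly g (of_nat e))"
    by (auto simp: P0_def heval_at1)
  also have "\<dots> \<longleftrightarrow> degree f \<le> nat da \<and> degree g \<le> nat db \<and>
     poly f 0 = lam 0 * poly g 0 \<and> poly f 1 = lam 1 * poly g 1 \<and>
     poly f 2 = lam 2 * poly g 2 \<and> poly f 3 = lam 3 * poly g 3" unfolding lt4 by auto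
  finally show ?thesis .
qed

lemma jump_example:
  assumes d: "0 \<le> da" "da \<le> 2" "0 \<le> db" "db \<le> 2"
  shows "h0_G5 da db P0 P0 (\<lambda>e. if e = 3 then 2 else 1) + 1 = h0_G5 da db P0 P0 (\<lambda>_. 1)"
proof -
  define lamB :: "nat \<Rightarrow> complex" where "lamB = (\<lambda>e. if e = 3 then 2 else 1)"
  define SA where "SA = G5_sections da db P0 P0 (\<lambda>_. 1)"
  define SB where "SB = G5_sections da db P0 P0 lamB"
  define psi where "psi v = heval da (fst v) (P0 3)" for v :: "complex poly \<times> complex poly"
  have eqfg: "f = g" if "degree f \<le> nat da" "degree g \<le> nat db"
     "poly f 0 = poly g 0" "poly f 1 = poly g 1" "poly f 2 = poly g 2" for f g :: "complex poly"
  proof -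
    have "degree (f - g) \<le> 2"
      using degree_diff_le[of f 2 g] that(1,2) d by (auto simp: nat_le_iff)
    hence "f - g = 0" by (rule roots3[of _ 0 1 2]) (use that in auto)
    thus ?thesis by simp
  qed
  have psi_eq: "psi (f, g) = poly f 3" if "degree f \<le> nat da" for f g
    using heval_at1[OF that, of 3] by (simp add: psi_def P0_def)
  have "SB = {v \<in> SA. psi v = 0}"
  proof (intro equalityI subsetI)
    fix v assume "v \<in> SB"
    then obtain f g where v: "v = (f, g)" and c: "(f, g) \<in> SB" by (cases v) auto
    have c': "degree f \<le> nat da" "degree g \<le> nat db" "poly f 0 = poly g 0" "poly f 1 = poly g 1"
       "poly f 2 = poly g 2" "poly f 3 = 2 * poly g 3"
      using c unfolding SB_def sec_P0[OF d] by (auto simp: lamB_def)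
    have fg: "f = g" by (rule eqfg) (use c' in auto)
    hence "poly f 3 = 0" using c'(6) by simp
    thus "v \<in> {v \<in> SA. psi v = 0}"
      using c' fg psi_eq[OF c'(1)] by (simp add: v SA_def sec_P0[OF d])
  next
    fix v assume "v \<in> {v \<in> SA. psi v = 0}"
    then obtain f g where v: "v = (f, g)" and c: "(f, g) \<in> SA" "psi (f,g) = 0" by (cases v) auto
    have c': "degree f \<le> nat da" "degree g \<le> nat db" "poly f 0 = poly g 0" "poly f 1 = poly g 1"
       "poly f 2 = poly g 2" "poly f 3 = poly g 3"
      using c unfolding SA_def sec_P0[OF d] by auto
    have fg: "f = g" by (rule eqfg) (use c' in auto)
    have "poly f 3 = 0" using c(2) psi_eq[OF c'(1)] by simp
    thus "v \<in> SB" using c' fg by (simp add: v SB_def sec_P0[OF d] lamB_def)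
  qed
  moreover have "pv.dim {v \<in> SA. psi v = 0} + 1 = pv.dim SA"
  proof (rule pv.dim_hyperplane[OF _ finite_FF])
    show "pv.subspace SA" unfolding SA_def by (rule subspace_sections)
    show "SA \<subseteq> pv.span (FF da db)" unfolding SA_def by (rule sections_span)
    show "psi (x + y) = psi x + psi y" for x y by (simp add: psi_def heval_add)
    show "psi (pair_scale c x) = c * psi x" for c x by (simp add: psi_def pair_scale_def heval_smult)
    show "(1, 1) \<in> SA" using d by (simp add: SA_def sec_P0)
    show "psi (1, 1) = 1" using psi_eq[of 1 1] by simp
  qed
  ultimately show ?thesis by (simp add: h0_G5_def SA_def SB_def lamB_def)
qed

theorem mainTheorem12:
  fixes d\<^sub>\<alpha> d\<^sub>\<beta> :: int
  shows "G5_jumping d\<^sub>\<alpha> d\<^sub>\<beta> \<longleftrightarrow> (0 \<le> d\<^sub>\<alpha> \<and> d\<^sub>\<alpha> \<le> 2 \<and> 0 \<le> d\<^sub>\<beta> \<and> d\<^sub>\<beta> \<le> 2)"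
proof
  assume J: "G5_jumping d\<^sub>\<alpha> d\<^sub>\<beta>"
  show "0 \<le> d\<^sub>\<alpha> \<and> d\<^sub>\<alpha> \<le> 2 \<and> 0 \<le> d\<^sub>\<beta> \<and> d\<^sub>\<beta> \<le> 2"
  proof (rule ccontr)
    assume nj: "\<not> ?thesis"
    from J obtain P Q lam P' Q' lam' where M: "G5_member P Q lam" "G5_member P' Q' lam'"
      and ne: "h0_G5 d\<^sub>\<alpha> d\<^sub>\<beta> P Q lam \<noteq> h0_G5 d\<^sub>\<alpha> d\<^sub>\<beta> P' Q' lam'"
      unfolding G5_jumping_def by blast
    show False
    proof (cases "d\<^sub>\<alpha> \<ge> 3 \<or> d\<^sub>\<beta> \<ge> 3")
      case True
      show False using h0_big[OF M(1) True] h0_big[OF M(2) True] ne by simp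
    next
      case False
      show False using h0_small[OF M(1) False nj] h0_small[OF M(2) False nj] ne by simp
    qed
  qed
next
  assume d: "0 \<le> d\<^sub>\<alpha> \<and> d\<^sub>\<alpha> \<le> 2 \<and> 0 \<le> d\<^sub>\<beta> \<and> d\<^sub>\<beta> \<le> 2"
  have "G5_member P0 P0 (\<lambda>e. if e = 3 then 2 else 1)" "G5_member P0 P0 (\<lambda>_. 1)"
    using fp_P0 by (auto simp: G5_member_def)
  moreover have "h0_G5 d\<^sub>\<alpha> d\<^sub>\<beta> P0 P0 (\<lambda>e. if e = 3 then 2 else 1) \<noteq> h0_G5 d\<^sub>\<alpha> d\<^sub>\<beta> P0 P0 (\<lambda>_. 1)"
    using jump_example[of d\<^sub>\<alpha> d\<^sub>\<beta>] d by simp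
  ultimately show "G5_jumping d\<^sub>\<alpha> d\<^sub>\<beta>" unfolding G5_jumping_def by blast
qed


end
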